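(* Let $n\ge1$, let $a_1,\dots,a_n\ge2$ be integers, $d_0=1$, $d_i=a_1\cdots a_i$, and $\widetilde f_n(x_1,\dots,x_n)=x_1^{a_1}+x_1x_2^{a_2}+\cdots+x_{n-1}x_n^{a_n}$. For every $\mathbf{k}=(k_1,\dots,k_n)$ with $0\le k_i\le a_i-1$ ($i=1,\dots,n-1$) and $0\le k_n\le a_n-2$, $$\int_{(\mathbb{R}_{\ge0})^n}e^{-\widetilde f_n(\mathbf{x})}x_1^{k_1}\cdots x_n^{k_n}\,dx_1\cdots dx_n=\frac{1}{d_n}\prod_{l=1}^n\Gamma\!\left(1-\omega^{(n)}_{d_n-\psi(\mathbf{k}),l}\right),$$ where $\Gamma$ is the Gamma function.
   Context: $\psi(k_1,\dots,k_n):=\sum_{l=1}^n(-1)^{l-1}\frac{d_n}{d_l}(k_l+1)$, which for such $\mathbf{k}$ lies in $I'_n=\{\kappa\in\{1,\dots,d_n\}\mid a_n\nmid\kappa\}$. For $\kappa\in I'_n$ and $i=1,\dots,n$, $\omega^{(n)}_{\kappa,i}:=(-1)^{i-1}\frac{d_{i-1}}{d_n}\kappa-\lfloor(-1)^{i-1}\frac{d_{i-1}}{d_n}\kappa\rfloor$. *)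

theory Defs
  imports "HOL-Analysis.Analysis"
begin

text \<open>Exponents a_1,...,a_n are given as a function a :: nat => nat, indexed from 1.\<close>

definition dprod :: "(nat \<Rightarrow> nat) \<Rightarrow> nat \<Rightarrow> nat" where
  "dprod a i = (\<Prod>j\<in>{1..i}. a j)"

definition ftilde :: "(nat \<Rightarrow> nat) \<Rightarrow> nat \<Rightarrow> (nat \<Rightarrow> real) \<Rightarrow> real" where
  "ftilde a n x = x 1 ^ a 1 + (\<Sum>i\<in>{2..n}. x (i - 1) * x i ^ a i)"

definition psi :: "(nat \<Rightarrow> nat) \<Rightarrow> nat \<Rightarrow> (nat \<Rightarrow> nat) \<Rightarrow> int" where
  "psi a n k = (\<Sum>l\<in>{1..n}. (-1) ^ (l - 1) * int (dprod a n div dprod a l) * (int (k l) + 1))"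

definition omega :: "(nat \<Rightarrow> nat) \<Rightarrow> nat \<Rightarrow> int \<Rightarrow> nat \<Rightarrow> real" where
  "omega a n \<kappa> i =
     (let t = (-1) ^ (i - 1) * real (dprod a (i - 1)) / real (dprod a n) * real_of_int \<kappa>
      in t - real_of_int \<lfloor>t\<rfloor>)"

end

theory Submission
  imports Defs "HOL-Real_Asymp.Real_Asymp"
begin


lemma Gamma_has_integral_Ioi:
  assumes "(z::real) > 0"
  shows "((\<lambda>t. t powr (z - 1) / exp t) has_integral Gamma z) {0<..}"
proof -
  have "((\<lambda>t. t powr (z - 1) / exp t) has_integral Gamma z) {0..}"
    by (rule Gamma_integral_real) fact
  hence "((\<lambda>t. if t \<in> {0<..} then t powr (z - 1) / exp t else 0) has_integral Gamma z) {0..}"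
    by (rule has_integral_spike [of "{0}", rotated 2]) auto
  also have "?this = ?thesis"
    by (subst has_integral_restrict) auto
  finally show ?thesis .
qed

lemma one_dim:
  fixes a c s :: real
  assumes a: "a > 0" and c: "c > 0" and s: "s > -1"
  shows "(\<integral>\<^sup>+y. ennreal (indicator {0<..} y * (y powr s * exp (- (c * y powr a)))) \<partial>lborel)
       = ennreal (c powr (-((s+1)/a)) / a * Gamma ((s+1)/a))"
proof -
  define z where "z = (s+1)/a"
  have z: "z > 0" using a s by (simp add: z_def)
  define K where "K = c powr (-z) / a"
  have K: "K > 0" using a c by (simp add: K_def)
  define h where "h t = K * (t powr (z - 1) / exp t)" for t
  define f where "f y = y powr s * exp (- (c * y powr a))" for y
  define g where "g t = (t/c) powr (1/a)" for t
  define g' where "g' t = (1/a) * (t/c) powr (1/a - 1) / c" for t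
  have hI: "(h has_integral K * Gamma z) {0<..}"
    unfolding h_def by (intro has_integral_mult_right Gamma_has_integral_Ioi z)
  have hN: "(\<integral>\<^sup>+t. ennreal (indicator {0<..} t * h t) \<partial>lborel) = ennreal (K * Gamma z)"
    using nn_integral_has_integral_lebesgue[OF _ hI] K unfolding h_def by simp
  have hmeas: "(\<lambda>t. indicator {0<..} t * h t) \<in> borel_measurable lborel"
    unfolding h_def by measurable
  have hint: "integrable lborel (\<lambda>t. indicator {0<..} t * h t)"
    apply (rule integrableI_nonneg[OF hmeas])
    subgoal using K by (auto intro!: AE_I2 simp: indicator_def h_def)
    subgoal using hN by simp
    done
  have fg: "f (g t) * g' t = h t" if "t > 0" for t
  proof -
    have "f (g t) * g' t = (t/c) powr (s/a) * exp (-t) * ((1/a) * (t/c) powr (1/a - 1) / c)"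
      using that a c by (simp add: f_def g_def g'_def powr_powr)
    also have "\<dots> = (1/a) * ((t/c) powr (s/a) * (t/c) powr (1/a - 1)) / c * exp (-t)"
      by simp
    also have "(t/c) powr (s/a) * (t/c) powr (1/a - 1) = (t/c) powr (z - 1)"
      using a by (simp add: powr_add[symmetric] z_def add_divide_distrib algebra_simps)
    also have "(t/c) powr (z - 1) = t powr (z-1) * c powr (-z) * c"
      using that c by (simp add: powr_divide powr_diff powr_minus divide_simps)
    finally show ?thesis using a c by (simp add: h_def K_def exp_minus field_simps)
  qed
  have sub:
    "set_integrable lborel (einterval 0 \<infinity>) f"
    "(LBINT x=0..\<infinity>. f x) = (LBINT t=0..\<infinity>. (f (g t) * g' t))"
  proof -
    have dg: "DERIV g x :> g' x" if "x > 0" for x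
      unfolding g_def g'_def using that a c
      by (auto intro!: derivative_eq_intros simp: field_simps)
    have cf: "isCont f (g x)" if "x > 0" for x
      unfolding f_def using that a c by (auto simp: g_def intro!: continuous_intros)
    have cg': "isCont g' x" if "x > 0" for x
      unfolding g'_def using that a c by (auto intro!: continuous_intros)
    have A: "((ereal \<circ> g \<circ> real_of_ereal) \<longlongrightarrow> 0) (at_right 0)"
      unfolding zero_ereal_def ereal_tendsto_simps g_def using a c by real_asymp
    have B: "((ereal \<circ> g \<circ> real_of_ereal) \<longlongrightarrow> \<infinity>) (at_left \<infinity>)"
      unfolding ereal_tendsto_simps g_def using a c by real_asymp
    have int: "set_integrable lborel (einterval 0 \<infinity>) (\<lambda>x. f (g x) * g' x)"
      unfolding set_integrable_def zero_ereal_def einterval_eq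
      by (rule Bochner_Integration.integrable_cong[THEN iffD1, OF refl _ hint]) (auto simp: fg indicator_def)
    have g'nn: "0 \<le> g' x" if "0 \<le> x" for x
      unfolding g'_def using a c that by simp
    note R = interval_integral_substitution_nonneg[of 0 \<infinity> g g' f, OF _ _ _ _ _ _ A B int]
    show "set_integrable lborel (einterval 0 \<infinity>) f"
      by (rule R(1)) (auto simp: zero_ereal_def dg cf cg' g'nn f_def)
    show "(LBINT x=0..\<infinity>. f x) = (LBINT t=0..\<infinity>. (f (g t) * g' t))"
      by (rule R(2)) (auto simp: zero_ereal_def dg cf cg' g'nn f_def)
  qed
  have "(LBINT t=0..\<infinity>. (f (g t) * g' t)) = (LBINT t. indicator {0<..} t * h t)"
    unfolding interval_lebesgue_integral_def set_lebesgue_integral_def zero_ereal_def einterval_eq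
    by (auto intro!: Bochner_Integration.integral_cong simp: fg indicator_def)
  also have "ennreal \<dots> = (\<integral>\<^sup>+t. ennreal (indicator {0<..} t * h t) \<partial>lborel)"
    by (rule nn_integral_eq_integral[OF hint, symmetric]) (use K in \<open>auto intro!: AE_I2 simp: indicator_def h_def\<close>)
  also have "\<dots> = ennreal (K * Gamma z)" by (rule hN)
  finally have 1: "ennreal (LBINT x=0..\<infinity>. f x) = ennreal (K * Gamma z)" using sub(2) by simp
  have fint: "integrable lborel (\<lambda>t. indicator {0<..} t * f t)"
    using sub(1) unfolding set_integrable_def zero_ereal_def einterval_eq by simp
  have "(\<integral>\<^sup>+y. ennreal (indicator {0<..} y * f y) \<partial>lborel) = ennreal (LBINT x=0..\<infinity>. f x)"
    unfolding interval_lebesgue_integral_def set_lebesgue_integral_def zero_ereal_def einterval_eq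
    by (subst nn_integral_eq_integral[OF fint]) (auto intro!: AE_I2 simp: indicator_def f_def)
  with 1 show ?thesis unfolding f_def K_def z_def by (simp add: mult.commute)
qed


lemma psf: "product_sigma_finite (\<lambda>_::nat. lborel :: real measure)"
  by (simp add: product_sigma_finite_def lborel.sigma_finite_measure_axioms)

lemma ftilde_Suc:
  assumes "n \<ge> 1"
  shows "ftilde a (Suc n) x = ftilde a n x + x n * x (Suc n) ^ a (Suc n)"
proof -
  have "{2..Suc n} = insert (Suc n) {2..n}" using assms by auto
  thus ?thesis unfolding ftilde_def by simp
qed

lemma ftilde_upd:
  assumes "m > n" "n \<ge> 1"
  shows "ftilde a n (x(m := y)) = ftilde a n x"
  unfolding ftilde_def using assms by (auto intro!: sum.cong)

lemma ftilde_meas: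
  "ftilde a n \<in> borel_measurable (PiM {1..n} (\<lambda>_. lborel))" if "n \<ge> 1"
proof -
  have c: "(\<lambda>x. x i) \<in> borel_measurable (PiM {1..n} (\<lambda>_. lborel))" if "i \<in> {1..n}" for i
    using measurable_component_singleton[OF that, of "\<lambda>_. lborel"] by simp
  show ?thesis unfolding ftilde_def
    using \<open>n \<ge> 1\<close>
    by (intro borel_measurable_add borel_measurable_power c borel_measurable_sum borel_measurable_times) auto
qed

lemma pos_set_meas:
  "(\<lambda>x. indicator {x. \<forall>i\<in>{1..n}. P (x i)} x :: real) \<in> borel_measurable (PiM {1..n} (\<lambda>_. lborel))"
  if [measurable]: "Measurable.pred borel P" for n :: nat
proof -
  have c: "(\<lambda>x. x i) \<in> measurable (PiM {1..n} (\<lambda>_. lborel)) borel" if "i \<in> {1..n}" for i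
    using measurable_component_singleton[OF that, of "\<lambda>_. lborel"] by simp
  have "Measurable.pred (PiM {1..n} (\<lambda>_. lborel)) (\<lambda>x. \<forall>i\<in>{1..n}. P (x i))"
  proof -
    have "Measurable.pred (PiM {1..n} (\<lambda>_. lborel)) (\<lambda>x. i \<in> {1..n} \<longrightarrow> P (x i))" for i
      by (cases "i \<in> {1..n}") (auto intro: measurable_compose[OF c])
    hence "Measurable.pred (PiM {1..n} (\<lambda>_. lborel)) (\<lambda>x. \<forall>i\<in>{1..n}. i \<in> {1..n} \<longrightarrow> P (x i))"
      by (intro pred_intros_finite) auto
    thus ?thesis by simp
  qed
  thus ?thesis by (simp add: pred_def)
qed



fun Cv :: "(nat \<Rightarrow> nat) \<Rightarrow> (nat \<Rightarrow> nat) \<Rightarrow> nat \<Rightarrow> real \<Rightarrow> bool" where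
  "Cv a k 0 s = True"
| "Cv a k (Suc 0) s = (s > -1)"
| "Cv a k (Suc (Suc n)) s = (s > -1 \<and> Cv a k (Suc n) (real (k (Suc n)) - (s+1) / real (a (Suc (Suc n)))))"

fun Rv :: "(nat \<Rightarrow> nat) \<Rightarrow> (nat \<Rightarrow> nat) \<Rightarrow> nat \<Rightarrow> real \<Rightarrow> real" where
  "Rv a k 0 s = 1"
| "Rv a k (Suc 0) s = Gamma ((s+1) / real (a 1)) / real (a 1)"
| "Rv a k (Suc (Suc n)) s = Gamma ((s+1) / real (a (Suc (Suc n)))) / real (a (Suc (Suc n)))
      * Rv a k (Suc n) (real (k (Suc n)) - (s+1) / real (a (Suc (Suc n))))"

lemma comp_meas: "i \<in> {1..n} \<Longrightarrow> (\<lambda>x. x i) \<in> borel_measurable (PiM {1..n} (\<lambda>_::nat. lborel::real measure))"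
  using measurable_component_singleton[of i "{1..n}" "\<lambda>_. lborel"] by simp

lemma integrand_meas:
  fixes n m :: nat and s :: real
  assumes "n \<ge> 1" "m \<le> n"
  shows "(\<lambda>x. ennreal (indicator {x. \<forall>i\<in>{1..n}. x i > 0} x * exp (- ftilde a n x)
            * (\<Prod>i\<in>{1..m}. x i ^ k i) * x n powr s)) \<in> borel_measurable (PiM {1..n} (\<lambda>_. lborel))"
proof -
  have p: "Measurable.pred borel (\<lambda>y::real. y > 0)" by measurable
  show ?thesis
    apply (intro measurable_compose[OF _ measurable_ennreal] borel_measurable_times
      pos_set_meas[OF p] measurable_compose[OF ftilde_meas[OF assms(1)]] borel_measurable_exp
      borel_measurable_uminus borel_measurable_prod borel_measurable_power comp_meas
      powr_real_measurable )
    using assms by (auto intro!: comp_meas measurable_const)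
qed

lemma main:
  fixes m :: nat and s :: real
  assumes "\<And>i. i \<in> {1..Suc m} \<Longrightarrow> a i \<ge> 1" "Cv a k (Suc m) s"
  shows "(\<integral>\<^sup>+x. ennreal (indicator {x. \<forall>i\<in>{1..Suc m}. x i > 0} x * exp (- ftilde a (Suc m) x)
            * (\<Prod>i\<in>{1..m}. x i ^ k i) * x (Suc m) powr s) \<partial>PiM {1..Suc m} (\<lambda>_. lborel))
         = ennreal (Rv a k (Suc m) s)"
  using assms
proof (induction m arbitrary: s)
  case 0
  have a1: "real (a 1) > 0" using 0(1)[of 1] by simp
  have s: "s > -1" using 0(2) by simp
  define F where "F y = ennreal (indicator {0<..} y * (y powr s * exp (- (1 * y powr real (a 1)))))" for y
  have e: "{1..Suc 0} = {1::nat}" by auto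
  have "(\<integral>\<^sup>+x. ennreal (indicator {x. \<forall>i\<in>{1..Suc 0}. x i > 0} x * exp (- ftilde a (Suc 0) x)
            * (\<Prod>i\<in>{1..0}. x i ^ k i) * x (Suc 0) powr s) \<partial>PiM {1..Suc 0} (\<lambda>_. lborel))
      = (\<integral>\<^sup>+x. F (x 1) \<partial>PiM {1::nat} (\<lambda>_. lborel))"
    unfolding e by (intro nn_integral_cong) (auto simp: F_def ftilde_def indicator_def powr_realpow)
  also have "\<dots> = (\<integral>\<^sup>+y. F y \<partial>lborel)"
    by (rule product_sigma_finite.product_nn_integral_singleton[OF psf]) (simp add: F_def)
  also have "\<dots> = ennreal (Rv a k (Suc 0) s)"
    unfolding F_def by (subst one_dim[OF a1 _ s]) auto
  finally show ?case .
next
  case (Suc m)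
  define n where "n = Suc m"
  define a' where "a' = real (a (Suc n))"
  have a': "a' > 0" using Suc(2)[of "Suc n"] by (simp add: a'_def n_def)
  have s: "s > -1" using Suc(3) by simp
  define s' where "s' = real (k n) - (s+1)/a'"
  have Cs': "Cv a k (Suc m) s'" using Suc(3) by (simp add: s'_def a'_def n_def)
  define G where "G = a' powr (-1) * Gamma ((s+1)/a')"
  have G: "G \<ge> 0" unfolding G_def using a' s by (auto intro!: Gamma_real_nonneg)
  define F where "F x = ennreal (indicator {x. \<forall>i\<in>{1..Suc n}. x i > 0} x * exp (- ftilde a (Suc n) x)
            * (\<Prod>i\<in>{1..n}. x i ^ k i) * x (Suc n) powr s)" for x
  define H where "H x = indicator {x. \<forall>i\<in>{1..n}. x i > 0} x * exp (- ftilde a n x)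
            * (\<Prod>i\<in>{1..m}. x i ^ k i) * x n powr s'" for x
  have ins: "{1..Suc n} = insert (Suc n) {1..n}" by auto
  have "integral\<^sup>N (PiM {1..Suc n} (\<lambda>_. lborel)) F
      = (\<integral>\<^sup>+x. (\<integral>\<^sup>+y. F (x(Suc n := y)) \<partial>lborel) \<partial>PiM {1..n} (\<lambda>_. lborel))"
  proof -
    have Fm: "F \<in> borel_measurable (PiM {1..Suc n} (\<lambda>_. lborel))"
      unfolding F_def by (rule integrand_meas) auto
    show ?thesis unfolding ins
      by (rule product_sigma_finite.product_nn_integral_insert[OF psf]) (use Fm ins in auto)
  qed
  also have "\<dots> = (\<integral>\<^sup>+x. ennreal (G * H x) \<partial>PiM {1..n} (\<lambda>_. lborel))"
  proof (intro nn_integral_cong)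
    fix x :: "nat \<Rightarrow> real"
    define B where "B = indicator {x. \<forall>i\<in>{1..n}. x i > 0} x * exp (- ftilde a n x) * (\<Prod>i\<in>{1..n}. x i ^ k i)"
    have B: "B \<ge> 0"
    proof -
      have "0 \<le> exp (- ftilde a n x) * (\<Prod>i\<in>{1..n}. x i ^ k i)" if "\<forall>i\<in>{1..n}. 0 < x i"
        using that by (intro mult_nonneg_nonneg prod_nonneg) (auto intro!: zero_le_power less_imp_le)
      thus ?thesis by (auto simp: indicator_def B_def)
    qed
    have n1: "n \<ge> 1" by (simp add: n_def)
    have allc: "(\<forall>i\<in>{1..Suc n}. 0 < (x(Suc n := y)) i) \<longleftrightarrow> (\<forall>i\<in>{1..n}. 0 < x i) \<and> 0 < y" for y
      unfolding ins by auto
    have prc: "(\<Prod>i\<in>{1..n}. (x(Suc n := y)) i ^ k i) = (\<Prod>i\<in>{1..n}. x i ^ k i)" for y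
      by (intro prod.cong) auto
    have "F (x(Suc n := y)) = ennreal B * ennreal (indicator {0<..} y * (y powr s * exp (- (x n * y powr a'))))" for y
    proof -
      have "F (x(Suc n := y)) = ennreal (B * (indicator {0<..} y * (y powr s * exp (- (x n * y powr a')))))"
      proof (cases "y > 0")
        case True
        have "y ^ a (Suc n) = y powr a'" using True by (simp add: a'_def powr_realpow)
        have ind: "indicator {x. \<forall>i\<in>{1..Suc n}. x i > 0} (x(Suc n := y)) = (indicator {x. \<forall>i\<in>{1..n}. x i > 0} x :: real)"
          unfolding indicator_def mem_Collect_eq allc using True by auto
        have ft: "ftilde a (Suc n) (x(Suc n:=y)) = ftilde a n x + x n * y powr a'"
          using ftilde_Suc[OF n1, of a "x(Suc n:=y)"] ftilde_upd[of n "Suc n" a x y] n1 \<open>y ^ a (Suc n) = y powr a'\<close> by simp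
        show ?thesis unfolding F_def B_def using True
          by (simp add: ind ft prc indicator_def exp_diff exp_minus field_simps)
      next
        case False
        have ind: "indicator {x. \<forall>i\<in>{1..Suc n}. x i > 0} (x(Suc n := y)) = (0::real)"
          unfolding indicator_def mem_Collect_eq allc using False by auto
        show ?thesis unfolding F_def B_def ind using False by simp
      qed
      thus ?thesis using B by (simp add: ennreal_mult')
    qed
    hence "(\<integral>\<^sup>+y. F (x(Suc n := y)) \<partial>lborel) = ennreal B * (\<integral>\<^sup>+y. ennreal (indicator {0<..} y * (y powr s * exp (- (x n * y powr a')))) \<partial>lborel)"
      by (simp add: nn_integral_cmult)
    also have "\<dots> = ennreal (G * H x)"
    proof (cases "\<forall>i\<in>{1..n}. 0 < x i")
      case True
      have xn: "x n > 0" using True n1 by auto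
      have "ennreal B * (\<integral>\<^sup>+y. ennreal (indicator {0<..} y * (y powr s * exp (- (x n * y powr a')))) \<partial>lborel)
          = ennreal B * ennreal (x n powr (-((s+1)/a')) / a' * Gamma ((s+1)/a'))"
        by (subst one_dim[OF a' xn s]) simp
      also have "\<dots> = ennreal (B * (x n powr (-((s+1)/a')) / a' * Gamma ((s+1)/a')))"
        using B by (simp only: ennreal_mult')
      also have "B * (x n powr (-((s+1)/a')) / a' * Gamma ((s+1)/a')) = G * H x"
      proof -
        have pe: "(\<Prod>i\<in>{1..n}. x i ^ k i) = (\<Prod>i\<in>{1..m}. x i ^ k i) * x n ^ k n"
          unfolding n_def by (simp add: prod.nat_ivl_Suc')
        have pw: "x n ^ k n * x n powr (-((s+1)/a')) = x n powr s'"
          using xn by (simp add: s'_def powr_realpow[symmetric] powr_add[symmetric])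
        show ?thesis unfolding B_def H_def G_def pe pw[symmetric] using True a'
          by (simp add: indicator_def powr_minus divide_inverse mult_ac)
      qed
      finally show ?thesis .
    next
      case False
      then show ?thesis unfolding B_def H_def indicator_def by auto
    qed
    finally show "(\<integral>\<^sup>+y. F (x(Suc n := y)) \<partial>lborel) = ennreal (G * H x)" .
  qed
  also have "\<dots> = ennreal G * (\<integral>\<^sup>+x. ennreal (H x) \<partial>PiM {1..n} (\<lambda>_. lborel))"
  proof -
    have Hm: "(\<lambda>x. ennreal (H x)) \<in> borel_measurable (PiM {1..n} (\<lambda>_. lborel))"
      unfolding H_def by (rule integrand_meas) (auto simp: n_def)
    show ?thesis using G by (simp only: ennreal_mult' nn_integral_cmult[OF Hm])
  qed
  also have "(\<integral>\<^sup>+x. ennreal (H x) \<partial>PiM {1..n} (\<lambda>_. lborel)) = ennreal (Rv a k n s')"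
    unfolding H_def n_def by (rule Suc(1)) (use Suc(2) Cs' in auto)
  also have "ennreal G * ennreal (Rv a k n s') = ennreal (Rv a k (Suc n) s)"
    using G by (simp add: ennreal_mult'[symmetric] n_def G_def s'_def a'_def powr_minus divide_inverse mult_ac)
  finally show ?case unfolding F_def n_def .
qed



lemma seqR:
  fixes e :: "nat \<Rightarrow> real"
  assumes "e (Suc m) = s + 1"
    and "\<And>l. l \<in> {1..m} \<Longrightarrow> e l = real (k l) + 1 - e (Suc l) / real (a (Suc l))"
    and "\<And>l. l \<in> {1..Suc m} \<Longrightarrow> e l > 0"
  shows "Cv a k (Suc m) s \<and> Rv a k (Suc m) s = (\<Prod>l\<in>{1..Suc m}. Gamma (e l / real (a l)) / real (a l))"
  using assms
proof (induction m arbitrary: s)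
  case 0
  have "e 1 > 0" using 0(3)[of 1] by simp
  then show ?case using 0(1) by simp
next
  case (Suc m)
  define s' where "s' = real (k (Suc m)) - (s+1) / real (a (Suc (Suc m)))"
  have es: "e (Suc m) = s' + 1"
    using Suc(3)[of "Suc m"] Suc(2) by (simp add: s'_def)
  have IH: "Cv a k (Suc m) s' \<and> Rv a k (Suc m) s' = (\<Prod>l\<in>{1..Suc m}. Gamma (e l / real (a l)) / real (a l))"
  proof (rule Suc(1)[OF es])
    fix l assume "l \<in> {1..m}" thus "e l = real (k l) + 1 - e (Suc l) / real (a (Suc l))" using Suc(3) by auto
  next
    fix l assume "l \<in> {1..Suc m}" thus "e l > 0" using Suc(4) by auto
  qed
  have sp: "s > -1" using Suc(4)[of "Suc (Suc m)"] Suc(2) by simp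
  show ?case using IH sp Suc(2)
    by (simp add: s'_def prod.nat_ivl_Suc' del: Rv.simps(2) Cv.simps(2)) (simp add: mult_ac)
qed



lemma dprod_Suc: "dprod a (Suc j) = dprod a j * a (Suc j)"
  unfolding dprod_def by (simp add: prod.nat_ivl_Suc' mult.commute)

lemma dprod_0: "dprod a 0 = 1" unfolding dprod_def by simp

lemma dprod_pos: "(\<And>i. i \<in> {1..j} \<Longrightarrow> a i \<ge> 1) \<Longrightarrow> dprod a j > 0"
  unfolding dprod_def by (intro prod_pos) force

lemma dprod_dvd: "j \<le> l \<Longrightarrow> dprod a j dvd dprod a l"
  unfolding dprod_def by (intro prod_dvd_prod_subset) auto

definition ee :: "(nat \<Rightarrow> nat) \<Rightarrow> (nat \<Rightarrow> nat) \<Rightarrow> nat \<Rightarrow> nat \<Rightarrow> real" where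
  "ee a k n l = (\<Sum>j\<in>{l..n}. (-1)^(j-l) * (real (k j) + 1) * real (dprod a l) / real (dprod a j))"

locale setting =
  fixes a k :: "nat \<Rightarrow> nat" and n :: nat
  assumes n1: "n \<ge> 1"
    and a2: "\<And>i. i \<in> {1..n} \<Longrightarrow> a i \<ge> 2"
    and kb: "\<And>i. i \<in> {1..n-1} \<Longrightarrow> k i \<le> a i - 1"
    and kn: "k n \<le> a n - 2"
begin

lemma Dpos: "j \<le> n \<Longrightarrow> real (dprod a j) > 0"
  using dprod_pos[of j a] a2 by force

lemma eN: "ee a k n n = real (k n) + 1"
  unfolding ee_def using Dpos[of n] by simp

lemma erec:
  assumes "1 \<le> l" "l < n"
  shows "ee a k n l = real (k l) + 1 - ee a k n (Suc l) / real (a (Suc l))"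
proof -
  have ins: "{l..n} = insert l {Suc l..n}" using assms by auto
  have al: "real (a (Suc l)) > 0" using a2[of "Suc l"] assms by simp
  have Dl: "real (dprod a l) > 0" using Dpos assms by simp
  have t: "(-1)^(j-l) * (real (k j) + 1) * real (dprod a l) / real (dprod a j)
      = - ((-1)^(j - Suc l) * (real (k j) + 1) * real (dprod a (Suc l)) / real (dprod a j)) / real (a (Suc l))"
    if "j \<in> {Suc l..n}" for j
  proof -
    have "j - l = Suc (j - Suc l)" using that by auto
    moreover have "real (dprod a j) > 0" using Dpos[of j] that by auto
    ultimately show ?thesis using al by (simp add: dprod_Suc field_simps)
  qed
  have S: "(\<Sum>j\<in>{Suc l..n}. (-1)^(j-l) * (real (k j) + 1) * real (dprod a l) / real (dprod a j))
     = - (\<Sum>j\<in>{Suc l..n}. (-1)^(j - Suc l) * (real (k j) + 1) * real (dprod a (Suc l)) / real (dprod a j)) / real (a (Suc l))"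
    by (subst sum.cong[OF refl t]) (auto simp: sum_negf sum_divide_distrib)
  have "ee a k n l = (real (k l) + 1) + (\<Sum>j\<in>{Suc l..n}. (-1)^(j-l) * (real (k j) + 1) * real (dprod a l) / real (dprod a j))"
    unfolding ee_def ins using Dl by (subst sum.insert) auto
  also note S
  finally show ?thesis unfolding ee_def by simp
qed

lemma ebounds: "l \<in> {1..n} \<Longrightarrow> 0 < ee a k n l \<and> ee a k n l < real (a l)"
proof (induction "n - l" arbitrary: l)
  case 0
  hence "l = n" by auto
  thus ?case using eN kn a2[of n] n1 by auto
next
  case (Suc d)
  hence l: "1 \<le> l" "l < n" by auto
  have IH: "0 < ee a k n (Suc l) \<and> ee a k n (Suc l) < real (a (Suc l))"
    using Suc by auto
  have al: "real (a (Suc l)) > 0" using a2[of "Suc l"] l by simp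
  have q: "0 < ee a k n (Suc l) / real (a (Suc l))" "ee a k n (Suc l) / real (a (Suc l)) < 1"
    using IH al by auto
  have "k l \<le> a l - 1" using kb l by auto
  moreover have "a l \<ge> 2" using a2 l by auto
  ultimately have "real (k l) + 1 \<le> real (a l)" by linarith
  thus ?case using erec[OF l] q by auto
qed

end



context setting begin

lemma sign_eq: "l \<ge> 1 \<Longrightarrow> l \<le> j \<Longrightarrow> (-1::real)^(l-1) * (-1)^(j-1) = (-1)^(j-l)"
proof -
  assume "l \<ge> 1" "l \<le> j"
  hence "(l-1)+(j-1) = (j-l) + 2*(l-1)" by arith
  hence "(-1::real)^(l-1) * (-1)^(j-1) = (-1)^((j-l) + 2*(l-1))" by (metis power_add)
  thus ?thesis by (simp add: power_add power_mult)
qed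

lemma omega_eq:
  assumes l: "l \<in> {1..n}"
  shows "1 - omega a n (int (dprod a n) - psi a n k) l = ee a k n l / real (a l)"
proof -
  define D where "D j = real (dprod a j)" for j
  have Dp: "j \<le> n \<Longrightarrow> D j > 0" for j using Dpos by (simp add: D_def)
  have al: "real (a l) > 0" using a2 l by force
  define \<kappa> where "\<kappa> = int (dprod a n) - psi a n k"
  have dv: "real (dprod a n div dprod a j) = D n / D j" if "j \<le> n" for j
    unfolding D_def using dprod_dvd[OF that] by (simp add: real_of_nat_div)
  have kap: "real_of_int \<kappa> = D n - (\<Sum>j\<in>{1..n}. (-1)^(j-1) * (D n / D j) * (real (k j) + 1))"
    unfolding \<kappa>_def psi_def by (simp add: D_def[symmetric] dv)
  define t where "t = (-1)^(l-1) * real (dprod a (l-1)) / real (dprod a n) * real_of_int \<kappa>"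
  have t1: "t = (-1)^(l-1) * D (l-1) - (\<Sum>j\<in>{1..n}. (-1)^(l-1) * (-1)^(j-1) * (D (l-1) / D j) * (real (k j) + 1))"
    unfolding t_def kap D_def[symmetric] using Dp[of n]
    apply (simp add: right_diff_distrib sum_distrib_left)
    apply (rule sum.cong, simp_all add: field_simps)
    done
  have splt: "{1..n} = {1..l-1} \<union> {l..n}" using l by auto
  define M where "M = (-1)^(l-1) * int (dprod a (l-1)) - (\<Sum>j\<in>{1..l-1}. (-1)^(l-1) * (-1)^(j-1) * int (dprod a (l-1) div dprod a j) * (int (k j) + 1))"
  have dv2: "real (dprod a (l-1) div dprod a j) = D (l-1) / D j" if "j \<le> l-1" for j
    unfolding D_def using dprod_dvd[OF that] by (simp add: real_of_nat_div)
  have Mr: "real_of_int M = (-1)^(l-1) * D (l-1) - (\<Sum>j\<in>{1..l-1}. (-1)^(l-1) * (-1)^(j-1) * (D (l-1) / D j) * (real (k j) + 1))"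
    unfolding M_def
    apply (simp add: D_def[symmetric])
    apply (intro sum.cong refl)
    apply (simp add: dv2[simplified])
    done
  have hi: "(\<Sum>j\<in>{l..n}. (-1)^(l-1) * (-1)^(j-1) * (D (l-1) / D j) * (real (k j) + 1)) = ee a k n l / real (a l)"
  proof -
    have "D l = D (l-1) * real (a l)" using l unfolding D_def by (cases l) (auto simp: dprod_Suc)
    hence "D (l-1) = D l / real (a l)" using al by simp
    note Dl = this
    have "(\<Sum>j\<in>{l..n}. (-1)^(l-1) * (-1)^(j-1) * (D (l-1) / D j) * (real (k j) + 1))
        = (\<Sum>j\<in>{l..n}. (-1)^(j-l) * (real (k j) + 1) * D l / D j / real (a l))"
    proof (rule sum.cong[OF refl])
      fix j assume "j \<in> {l..n}"
      hence se: "(-1::real)^(l-1) * (-1)^(j-1) = (-1)^(j-l)" using l by (intro sign_eq) auto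
      show "(-1)^(l-1) * (-1)^(j-1) * (D (l-1) / D j) * (real (k j) + 1) = (-1)^(j-l) * (real (k j) + 1) * D l / D j / real (a l)"
        by (simp only: se Dl) (simp add: field_simps)
    qed
    hence "(\<Sum>j\<in>{l..n}. (-1)^(l-1) * (-1)^(j-1) * (D (l-1) / D j) * (real (k j) + 1))
        = (\<Sum>j\<in>{l..n}. (-1)^(j-l) * (real (k j) + 1) * D l / D j) / real (a l)"
      by (simp add: sum_divide_distrib)
    thus ?thesis unfolding ee_def D_def by simp
  qed
  have tM: "t = real_of_int M - ee a k n l / real (a l)"
    unfolding t1 Mr hi[symmetric] splt
    by (subst sum.union_disjoint) auto
  have q: "0 < ee a k n l / real (a l)" "ee a k n l / real (a l) < 1"
    using ebounds[OF l] al by auto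
  have fl: "\<lfloor>t\<rfloor> = M - 1"
    unfolding tM using q by (intro floor_unique) auto
  show ?thesis
    unfolding omega_def Let_def t_def[symmetric] \<kappa>_def[symmetric] fl using tM by simp
qed

end


lemma AE_nonzero:
  fixes n :: nat
  shows "AE x in PiM {1..n} (\<lambda>_. lborel). \<forall>i\<in>{1..n}. x i \<noteq> (0::real)"
proof (rule AE_finite_allI[OF finite_atLeastAtMost])
  fix i assume i: "i \<in> {1..n}"
  let ?N = "PiE {1..n} (\<lambda>j. if j = i then {0::real} else UNIV)"
  have "emeasure (PiM {1..n} (\<lambda>_. lborel)) ?N = (\<Prod>j\<in>{1..n}. emeasure lborel (if j = i then {0::real} else UNIV))"
    by (rule product_sigma_finite.emeasure_PiM[OF psf]) auto
  also have "\<dots> = 0"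
    using i by (intro prod_zero) auto
  finally have NS: "?N \<in> null_sets (PiM {1..n} (\<lambda>_. lborel))"
    by (intro null_setsI) (auto intro!: sets_PiM_I_finite)
  have SUB: "{x \<in> space (PiM {1..n} (\<lambda>_. lborel)). \<not> x i \<noteq> 0} \<subseteq> ?N"
    using i by (auto simp: space_PiM PiE_iff extensional_def)
  show "AE x in PiM {1..n} (\<lambda>_. lborel). x i \<noteq> (0::real)"
    by (rule AE_I'[OF NS]) (use SUB in auto)
qed

theorem corollary2p16:
  fixes n :: nat and a k :: "nat \<Rightarrow> nat"
  assumes "n \<ge> 1"
    and "\<And>i. i \<in> {1..n} \<Longrightarrow> a i \<ge> 2"
    and "\<And>i. i \<in> {1..n-1} \<Longrightarrow> k i \<le> a i - 1"
    and "k n \<le> a n - 2"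
  shows "(\<integral>\<^sup>+ x. ennreal (indicator {x. \<forall>i\<in>{1..n}. x i \<ge> 0} x
              * exp (- ftilde a n x) * (\<Prod>i\<in>{1..n}. x i ^ k i))
            \<partial>(PiM {1..n} (\<lambda>_. lborel)))
         = ennreal (1 / real (dprod a n) *
             (\<Prod>l\<in>{1..n}. Gamma (1 - omega a n (int (dprod a n) - psi a n k) l)))"
proof -
  interpret setting a k n using assms by unfold_locales auto
  obtain m where nm: "n = Suc m" using assms(1) by (cases n) auto
  have SR: "Cv a k (Suc m) (real (k (Suc m))) \<and> Rv a k (Suc m) (real (k (Suc m))) =
       (\<Prod>l\<in>{1..Suc m}. Gamma (ee a k n l / real (a l)) / real (a l))"
  proof (rule seqR)
    show "ee a k n (Suc m) = real (k (Suc m)) + 1" using eN nm by simp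
    show "\<And>l. l \<in> {1..m} \<Longrightarrow> ee a k n l = real (k l) + 1 - ee a k n (Suc l) / real (a (Suc l))"
      using erec nm by auto
    show "\<And>l. l \<in> {1..Suc m} \<Longrightarrow> 0 < ee a k n l" using ebounds nm by auto
  qed
  have "(\<integral>\<^sup>+ x. ennreal (indicator {x. \<forall>i\<in>{1..n}. x i \<ge> 0} x
              * exp (- ftilde a n x) * (\<Prod>i\<in>{1..n}. x i ^ k i))
            \<partial>(PiM {1..n} (\<lambda>_. lborel)))
      = (\<integral>\<^sup>+x. ennreal (indicator {x. \<forall>i\<in>{1..n}. x i > 0} x * exp (- ftilde a n x)
            * (\<Prod>i\<in>{1..m}. x i ^ k i) * x n powr real (k n)) \<partial>PiM {1..n} (\<lambda>_. lborel))"
  proof (rule nn_integral_cong_AE)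
    show "AE x in PiM {1..n} (\<lambda>_. lborel). ennreal (indicator {x. \<forall>i\<in>{1..n}. x i \<ge> 0} x
              * exp (- ftilde a n x) * (\<Prod>i\<in>{1..n}. x i ^ k i)) =
          ennreal (indicator {x. \<forall>i\<in>{1..n}. x i > 0} x * exp (- ftilde a n x)
            * (\<Prod>i\<in>{1..m}. x i ^ k i) * x n powr real (k n))"
      using AE_nonzero[of n]
    proof eventually_elim
      case (elim x)
      have iff: "(\<forall>i\<in>{1..n}. x i \<ge> 0) \<longleftrightarrow> (\<forall>i\<in>{1..n}. x i > 0)"
        using elim by force
      show ?case
      proof (cases "\<forall>i\<in>{1..n}. x i > 0")
        case True
        have xn: "x n > 0" using True assms(1) by auto
        have "(\<Prod>i\<in>{1..n}. x i ^ k i) = (\<Prod>i\<in>{1..m}. x i ^ k i) * x n powr real (k n)"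
          unfolding nm using xn[unfolded nm] by (simp add: prod.nat_ivl_Suc' powr_realpow)
        thus ?thesis using True iff by (simp add: indicator_def mult_ac)
      next
        case False
        thus ?thesis using iff by (auto simp: indicator_def)
      qed
    qed
  qed
  also have "\<dots> = ennreal (Rv a k n (real (k n)))"
    unfolding nm
  proof (rule main)
    show "\<And>i. i \<in> {1..Suc m} \<Longrightarrow> 1 \<le> a i" using assms(2) nm by force
    show "Cv a k (Suc m) (real (k (Suc m)))" using SR by simp
  qed
  also have "Rv a k n (real (k n)) = (\<Prod>l\<in>{1..n}. Gamma (ee a k n l / real (a l)) / real (a l))"
    using SR nm by simp
  also have "(\<Prod>l\<in>{1..n}. Gamma (ee a k n l / real (a l)) / real (a l))
      = 1 / real (dprod a n) * (\<Prod>l\<in>{1..n}. Gamma (1 - omega a n (int (dprod a n) - psi a n k) l))"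
  proof -
    have "(\<Prod>l\<in>{1..n}. Gamma (ee a k n l / real (a l)) / real (a l))
        = (\<Prod>l\<in>{1..n}. Gamma (1 - omega a n (int (dprod a n) - psi a n k) l)) / (\<Prod>l\<in>{1..n}. real (a l))"
      by (simp add: prod_dividef omega_eq)
    also have "(\<Prod>l\<in>{1..n}. real (a l)) = real (dprod a n)"
      unfolding dprod_def by simp
    finally show ?thesis by simp
  qed
  finally show ?thesis .
qed

end
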